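(* Let $a,\alpha\in\mathcal{F}\setminus\{0\}$, $n$ a positive integer, and $f_n(x)=\alpha x^n$. (a) If $\operatorname{char}\mathcal{F}=0$, then for all $x,y\in D(a,|a|_\mathfrak{p}/q^{e+1})$, $|f_n(x)-f_n(y)|_\mathfrak{p}=|\alpha|_\mathfrak{p}|n|_\mathfrak{p}|a|_\mathfrak{p}^{n-1}|x-y|_\mathfrak{p}$, where $e$ is the ramification index of $\mathcal{F}/\mathbb{Q}_p$. (b) If $\operatorname{char}\mathcal{F}=p>0$, then for all $x,y\in D(a,|a|_\mathfrak{p}/q)$, $|f_n(x)-f_n(y)|_\mathfrak{p}=|\alpha|_\mathfrak{p}|a|_\mathfrak{p}^{\,n-p^{v_p(n)}}|x-y|_\mathfrak{p}^{\,p^{v_p(n)}}$. In particular, if $p\nmid n$, $f_n$ is scaling on $D(a,|a|_\mathfrak{p}/q)$ with scaling ratio $|\alpha|_\mathfrak{p}|a|_\mathfrak{p}^{n-1}$.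
   Context: $\mathcal{F}$ is a non-Archimedean local field, $q$ the cardinality of its residue field, $|\cdot|_\mathfrak{p}$ the normalized absolute value; $D(a,r)=\{x:|x-a|_\mathfrak{p}\le r\}$. When $\operatorname{char}\mathcal{F}=0$, $\mathcal{F}$ is a finite extension of $\mathbb{Q}_p$ with ramification index $e$, and for integers $k$, $v_\mathfrak{p}(k)=e\,v_p(k)$ where $v_p$ is the usual $p$-adic valuation on $\mathbb{Z}$; $|n|_\mathfrak{p}$ denotes the absolute value of the integer $n$ viewed in $\mathcal{F}$. $v_p(n)$ is the exponent of $p$ in $n$. A map is scaling with ratio $q^\lambda$ if $|f(x)-f(y)|_\mathfrak{p}=q^\lambda|x-y|_\mathfrak{p}$ for all $x,y$ in its domain. *)

theory Defs
  imports "HOL-Analysis.Analysis" "HOL-Computational_Algebra.Computational_Algebra"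
begin

definition val_ring :: "('a::field \<Rightarrow> real) \<Rightarrow> 'a set" where
  "val_ring absp = {x. absp x \<le> 1}"

text \<open>Residue field O/m, as the set of cosets of the maximal ideal m = {|x| < 1} in O.\<close>
definition residue_field :: "('a::field \<Rightarrow> real) \<Rightarrow> 'a set set" where
  "residue_field absp = (\<lambda>x. {y \<in> val_ring absp. absp (y - x) < 1}) ` val_ring absp"

definition nonarch_abs :: "('a::field \<Rightarrow> real) \<Rightarrow> bool" where
  "nonarch_abs absp \<longleftrightarrow>
     (\<forall>x. 0 \<le> absp x) \<and> (\<forall>x. absp x = 0 \<longleftrightarrow> x = 0) \<and>
     (\<forall>x y. absp (x * y) = absp x * absp y) \<and>
     (\<forall>x y. absp (x + y) \<le> max (absp x) (absp y))"

definition abs_complete :: "('a::field \<Rightarrow> real) \<Rightarrow> bool" where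
  "abs_complete absp \<longleftrightarrow>
     (\<forall>X::nat \<Rightarrow> 'a. (\<forall>\<epsilon>>0. \<exists>N. \<forall>m\<ge>N. \<forall>n\<ge>N. absp (X m - X n) < \<epsilon>) \<longrightarrow>
        (\<exists>L. \<forall>\<epsilon>>0. \<exists>N. \<forall>n\<ge>N. absp (X n - L) < \<epsilon>))"

definition nonarch_local_field :: "('a::field \<Rightarrow> real) \<Rightarrow> nat \<Rightarrow> bool" where
  "nonarch_local_field absp q \<longleftrightarrow>
     nonarch_abs absp \<and> abs_complete absp \<and>
     finite (residue_field absp) \<and> card (residue_field absp) = q \<and>
     absp ` (UNIV - {0}) = range (\<lambda>k::int. real q powi k)"

definition disk :: "('a::field \<Rightarrow> real) \<Rightarrow> 'a \<Rightarrow> real \<Rightarrow> 'a set" where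
  "disk absp a r = {x. absp (x - a) \<le> r}"

end

theory Submission
  imports Defs
begin


context
  fixes absp :: "'a::field \<Rightarrow> real"
  assumes N: "nonarch_abs absp"
begin

lemma na_nonneg: "0 \<le> absp x" using N unfolding nonarch_abs_def by blast
lemma na_zero: "absp x = 0 \<longleftrightarrow> x = 0" using N unfolding nonarch_abs_def by blast
lemma na_mult: "absp (x * y) = absp x * absp y" using N unfolding nonarch_abs_def by blast
lemma na_add: "absp (x + y) \<le> max (absp x) (absp y)" using N unfolding nonarch_abs_def by blast

lemma na_0: "absp 0 = 0" using na_zero by simp

lemma na_one: "absp 1 = 1"
proof -
  have "absp 1 = absp 1 * absp 1" using na_mult[of 1 1] by simp
  moreover have "absp 1 \<noteq> 0" using na_zero by simp
  ultimately show ?thesis by (metis mult_cancel_left1)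
qed

lemma na_minus: "absp (- x) = absp x"
proof -
  have "absp (-1) * absp (-1) = 1" using na_mult[of "-1" "-1"] na_one by simp
  then have "absp (-1) = 1" using na_nonneg[of "-1"]
    by (metis abs_of_nonneg abs_square_eq_1 mult.commute power2_eq_square)
  then show ?thesis using na_mult[of "-1" x] by simp
qed

lemma na_diff: "absp (x - y) \<le> max (absp x) (absp y)"
  using na_add[of x "-y"] na_minus[of y] by simp

lemma na_power: "absp (x ^ n) = absp x ^ n"
  by (induction n) (simp_all add: na_one na_mult)

lemma na_divide: "absp (x / y) = absp x / absp y"
proof (cases "y = 0")
  case True then show ?thesis using na_0 by simp
next
  case False
  have "absp (x / y) * absp y = absp x" using na_mult[of "x/y" y] False by simp
  moreover have "absp y \<noteq> 0" using False na_zero by simp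
  ultimately show ?thesis by (simp add: field_simps)
qed

lemma na_of_nat_le: "absp (of_nat k) \<le> 1"
proof (induction k)
  case 0 then show ?case using na_0 by simp
next
  case (Suc k)
  then show ?case using na_add[of "of_nat k" 1] na_one by (simp add: add.commute)
qed

lemma na_of_int_le: "absp (of_int k) \<le> 1"
proof (cases "k \<ge> 0")
  case True
  then have "of_int k = (of_nat (nat k) :: 'a)" by simp
  then show ?thesis using na_of_nat_le by simp
next
  case False
  then have "of_int k = - (of_nat (nat (-k)) :: 'a)" by (metis minus_minus nat_0_le neg_0_le_iff_le nle_le of_int_minus of_int_of_nat_eq)
  then show ?thesis using na_of_nat_le na_minus by simp
qed

lemma na_sum_le:
  assumes "0 \<le> c" "\<And>i. i \<in> A \<Longrightarrow> absp (f i) \<le> c"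
  shows "absp (sum f A) \<le> c"
  using assms(2)
proof (induction A rule: infinite_finite_induct)
  case (infinite A) then show ?case using assms(1) na_0 by simp
next
  case empty then show ?case using assms(1) na_0 by simp
next
  case (insert x F)
  then show ?case using na_add[of "f x" "sum f F"] by fastforce
qed

lemma na_sum_less:
  assumes "0 < c" "\<And>i. i \<in> A \<Longrightarrow> absp (f i) < c"
  shows "absp (sum f A) < c"
  using assms(2)
proof (induction A rule: infinite_finite_induct)
  case (infinite A) then show ?case using assms(1) na_0 by simp
next
  case empty then show ?case using assms(1) na_0 by simp
next
  case (insert x F)
  then show ?case using na_add[of "f x" "sum f F"] by fastforce
qed

lemma na_add_eq:
  assumes "absp y < absp x"
  shows "absp (x + y) = absp x"
proof -
  have 1: "absp (x + y) \<le> absp x" using na_add[of x y] assms by simp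
  have "absp x \<le> max (absp (x + y)) (absp y)" using na_diff[of "x+y" y] by simp
  then have "absp x \<le> absp (x + y)" using assms by (simp add: max_def split: if_splits)
  with 1 show ?thesis by simp
qed

lemma na_unit:
  assumes p: "prime (p::nat)" and pl: "absp (of_nat p) < 1" and nd: "\<not> p dvd j"
  shows "absp (of_nat j) = 1"
proof (rule ccontr)
  assume ne: "absp (of_nat j) \<noteq> 1"
  then have lt: "absp (of_nat j) < 1" using na_of_nat_le[of j] by simp
  have "coprime p j" using p nd prime_imp_coprime by blast
  then have "gcd (int j) (int p) = 1" by (simp add: coprime_commute)
  then obtain u v where uv: "u * int j + v * int p = 1" using bezout_int[of "int j" "int p"] by metis
  then have "(of_int u * of_nat j + of_int v * of_nat p :: 'a) = 1"
    by (metis of_int_1 of_int_add of_int_mult of_int_of_nat_eq)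
  then have "absp (of_int u * of_nat j + of_int v * of_nat p :: 'a) = 1" using na_one by simp
  moreover have "absp (of_int u * (of_nat j :: 'a)) < 1"
    using na_mult lt na_of_int_le[of u] na_nonneg[of "of_int u"] na_nonneg[of "of_nat j"]
    by (metis less_le_trans mult_left_le_one_le mult_less_cancel_left2 mult_nonneg_nonneg mult_right_le_one_le nle_le not_le)
  moreover have "absp (of_int v * (of_nat p :: 'a)) < 1"
    using na_mult pl na_of_int_le[of v] na_nonneg[of "of_int v"] na_nonneg[of "of_nat p"]
    by (metis less_le_trans mult_left_le_one_le mult_less_cancel_left2 mult_nonneg_nonneg mult_right_le_one_le nle_le not_le)
  ultimately show False using na_add[of "of_int u * (of_nat j :: 'a)" "of_int v * of_nat p"] by linarith
qed

lemma na_powdiff: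
  assumes "absp s \<le> r" "absp t \<le> r"
  shows "absp (s ^ k - t ^ k) \<le> r ^ (k - 1) * absp (s - t)"
proof (cases "k = 0")
  case True then show ?thesis using na_0 na_nonneg[of "s-t"] by simp
next
  case False
  have r0: "0 \<le> r" using assms(1) na_nonneg[of s] by linarith
  have "s ^ k - t ^ k = (s - t) * (\<Sum>i<k. t ^ (k - Suc i) * s ^ i)" by (rule power_diff_sumr2)
  moreover have "absp (\<Sum>i<k. t ^ (k - Suc i) * s ^ i) \<le> r ^ (k - 1)"
  proof (rule na_sum_le)
    show "0 \<le> r ^ (k - 1)" using r0 by simp
    fix i assume i: "i \<in> {..<k}"
    have "absp (t ^ (k - Suc i) * s ^ i) = absp t ^ (k - Suc i) * absp s ^ i"
      by (simp add: na_mult na_power)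
    also have "\<dots> \<le> r ^ (k - Suc i) * r ^ i"
      using assms na_nonneg r0 by (intro mult_mono power_mono) auto
    also have "\<dots> = r ^ (k - 1)" using i by (simp flip: power_add)
    finally show "absp (t ^ (k - Suc i) * s ^ i) \<le> r ^ (k - 1)" .
  qed
  ultimately show ?thesis using na_mult na_nonneg[of "s-t"]
    by (simp add: mult.commute mult_left_mono)
qed

lemma na_core1:
  assumes s: "absp s \<le> r" and t: "absp t \<le> r" and n: "0 < n"
    and hyp: "\<And>j. 2 \<le> j \<Longrightarrow> j \<le> n \<Longrightarrow> absp (of_nat (n choose j)) * r ^ (j - 1) < absp (of_nat n)"
  shows "absp ((1 + s) ^ n - (1 + t) ^ n) = absp (of_nat n) * absp (s - t)"
proof (cases "s = t")
  case True then show ?thesis using na_0 by simp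
next
  case False
  have r0: "0 \<le> r" using s na_nonneg[of s] by linarith
  have npos: "0 < absp (of_nat n :: 'a)"
  proof (cases "n = 1")
    case True then show ?thesis using na_one by simp
  next
    case False
    then have n2: "2 \<le> n" using n by simp
    have "0 \<le> absp (of_nat (n choose 2) :: 'a) * r ^ (2 - 1)"
      using r0 na_nonneg by simp
    moreover have "absp (of_nat (n choose 2) :: 'a) * r ^ (2 - 1) < absp (of_nat n :: 'a)"
      by (rule hyp) (simp_all add: n2)
    ultimately show ?thesis by linarith
  qed
  have st: "0 < absp (s - t)" using False na_zero na_nonneg[of "s-t"] by (simp add: order_le_less)
  define g where "g k = of_nat (n choose k) * (s ^ k - t ^ k)" for k
  have bs: "(1 + u) ^ n = (\<Sum>k\<le>n. of_nat (n choose k) * u ^ k)" for u :: 'a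
    by (subst add.commute) (simp add: binomial_ring)
  have "(1 + s) ^ n - (1 + t) ^ n = (\<Sum>k\<le>n. of_nat (n choose k) * s ^ k - of_nat (n choose k) * t ^ k)"
    unfolding bs by (rule sum_subtractf[symmetric])
  also have "\<dots> = (\<Sum>k\<le>n. g k)" by (simp add: g_def right_diff_distrib)
  also have "{..n} = {0, 1} \<union> {2..n}" using n by auto
  also have "(\<Sum>k\<in>{0, 1} \<union> {2..n}. g k) = g 0 + g 1 + (\<Sum>k\<in>{2..n}. g k)"
    by (subst sum.union_disjoint) auto
  also have "g 0 + g 1 = of_nat n * (s - t)" by (simp add: g_def)
  finally have eq: "(1 + s) ^ n - (1 + t) ^ n = of_nat n * (s - t) + (\<Sum>k\<in>{2..n}. g k)" .
  have "absp (\<Sum>k\<in>{2..n}. g k) < absp (of_nat n) * absp (s - t)"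
  proof (rule na_sum_less)
    show "0 < absp (of_nat n) * absp (s - t)" using npos st by simp
    fix k assume k: "k \<in> {2..n}"
    have "absp (g k) = absp (of_nat (n choose k)) * absp (s ^ k - t ^ k)"
      by (simp add: g_def na_mult)
    also have "\<dots> \<le> absp (of_nat (n choose k)) * (r ^ (k - 1) * absp (s - t))"
      by (intro mult_left_mono na_powdiff s t na_nonneg)
    also have "\<dots> = (absp (of_nat (n choose k)) * r ^ (k - 1)) * absp (s - t)" by simp
    also have "\<dots> < absp (of_nat n) * absp (s - t)"
      using hyp[of k] k st by (intro mult_strict_right_mono) auto
    finally show "absp (g k) < absp (of_nat n) * absp (s - t)" .
  qed
  then have "absp (\<Sum>k\<in>{2..n}. g k) < absp (of_nat n * (s - t))" by (simp add: na_mult)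
  then have "absp (of_nat n * (s - t) + (\<Sum>k\<in>{2..n}. g k)) = absp (of_nat n * (s - t))"
    by (rule na_add_eq)
  then show ?thesis unfolding eq by (simp add: na_mult)
qed

lemma na_core2:
  assumes a: "a \<noteq> 0" and n: "0 < n"
    and x: "absp (x - a) \<le> absp a * r" and y: "absp (y - a) \<le> absp a * r"
    and hyp: "\<And>j. 2 \<le> j \<Longrightarrow> j \<le> n \<Longrightarrow> absp (of_nat (n choose j)) * r ^ (j - 1) < absp (of_nat n)"
  shows "absp (x ^ n - y ^ n) = absp (of_nat n) * absp a ^ (n - 1) * absp (x - y)"
proof -
  define s where "s = x / a - 1"
  define t where "t = y / a - 1"
  have apos: "0 < absp a" using a na_zero na_nonneg[of a] by (simp add: order_le_less)
  have xs: "x = a * (1 + s)" using a by (simp add: s_def)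
  have yt: "y = a * (1 + t)" using a by (simp add: t_def)
  have "s = (x - a) / a" using a by (simp add: s_def field_simps)
  then have "absp s = absp (x - a) / absp a" by (simp add: na_divide)
  then have sr: "absp s \<le> r" using x apos by (simp add: divide_le_eq mult.commute)
  have "t = (y - a) / a" using a by (simp add: t_def field_simps)
  then have "absp t = absp (y - a) / absp a" by (simp add: na_divide)
  then have tr: "absp t \<le> r" using y apos by (simp add: divide_le_eq mult.commute)
  have "x - y = a * (s - t)" by (simp add: xs yt algebra_simps)
  then have xy: "absp (x - y) = absp a * absp (s - t)" by (simp add: na_mult)
  have "x ^ n - y ^ n = a ^ n * ((1 + s) ^ n - (1 + t) ^ n)"
    by (simp add: xs yt power_mult_distrib right_diff_distrib)
  then have "absp (x ^ n - y ^ n) = absp a ^ n * (absp (of_nat n) * absp (s - t))"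
    using na_core1[OF sr tr n hyp] by (simp add: na_mult na_power)
  also have "absp a ^ n = absp a ^ (n - 1) * absp a" using n
    by (metis Suc_diff_1 power_Suc2)
  finally show ?thesis using xy by (simp add: mult_ac)
qed

lemma na_int_lower:
  assumes p: "prime (p::nat)" and pl: "absp (of_nat p) < 1" and j: "1 \<le> j"
  shows "absp (of_nat p :: 'a) ^ (j - 1) \<le> absp (of_nat j :: 'a)"
  using j
proof (induction j rule: less_induct)
  case (less j)
  have P0: "0 \<le> absp (of_nat p :: 'a)" by (rule na_nonneg)
  show ?case
  proof (cases "p dvd j")
    case False
    then have "absp (of_nat j :: 'a) = 1" using na_unit[OF p pl] by blast
    then show ?thesis using P0 pl by (simp add: power_le_one)
  next
    case True
    then obtain k where k: "j = p * k" by blast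
    have p2: "2 \<le> p" using p prime_ge_2_nat by blast
    have k1: "1 \<le> k" using k less.prems by (cases k) auto
    have kj: "k < j" using k k1 p2 by simp
    have "absp (of_nat j :: 'a) = absp (of_nat p :: 'a) * absp (of_nat k :: 'a)"
      by (simp add: k na_mult)
    also have "\<dots> \<ge> absp (of_nat p :: 'a) * absp (of_nat p :: 'a) ^ (k - 1)"
      using less.IH[OF kj k1] P0 by (simp add: mult_left_mono)
    moreover have "absp (of_nat p :: 'a) * absp (of_nat p :: 'a) ^ (k - 1) = absp (of_nat p :: 'a) ^ k"
      using k1 by (metis Suc_diff_1 less_le_trans power_Suc zero_less_one)
    moreover have "absp (of_nat p :: 'a) ^ (j - 1) \<le> absp (of_nat p :: 'a) ^ k"
      using kj P0 pl by (intro power_decreasing) auto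
    ultimately show ?thesis by linarith
  qed
qed

end


lemma q_ge2:
  fixes absp :: "'a::field \<Rightarrow> real"
  assumes F: "nonarch_local_field absp q"
  shows "2 \<le> q"
proof -
  have N: "nonarch_abs absp" using F by (simp add: nonarch_local_field_def)
  have img: "absp ` (UNIV - {0}) = range (\<lambda>k::int. real q powi k)"
    using F by (simp add: nonarch_local_field_def)
  have fin: "finite (residue_field absp)" "card (residue_field absp) = q"
    using F by (simp_all add: nonarch_local_field_def)
  have "q \<noteq> 0"
  proof
    assume "q = 0"
    then have "(0::real) \<in> absp ` (UNIV - {0})" using img
      by (metis (mono_tags, lifting) of_nat_0 power_int_0_left rangeI zero_neq_one)
    then obtain x :: 'a where "x \<in> UNIV - {0}" "0 = absp x" by (rule imageE)
    then show False using na_zero[OF N, of x] by simp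
  qed
  moreover have "q \<noteq> 1"
  proof
    assume q1: "q = 1"
    have one: "absp x = 1" if "x \<noteq> 0" for x :: 'a
    proof -
      have "absp x \<in> range (\<lambda>k::int. real q powi k)" using img that by blast
      then show ?thesis using q1 by auto
    qed
    have vr: "val_ring absp = UNIV" unfolding val_ring_def
      using one na_0[OF N] by (metis (mono_tags, lifting) UNIV_eq_I mem_Collect_eq order_refl zero_le_one)
    have sing: "{y \<in> val_ring absp. absp (y - x) < 1} = {x}" for x :: 'a
    proof (intro set_eqI iffI)
      fix y assume "y \<in> {y \<in> val_ring absp. absp (y - x) < 1}"
      then have "absp (y - x) < 1" by simp
      then have "y - x = 0" using one[of "y - x"] by (cases "y - x = 0") auto
      then show "y \<in> {x}" by simp
    next
      fix y assume "y \<in> {x}"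
      then show "y \<in> {y \<in> val_ring absp. absp (y - x) < 1}" using vr na_0[OF N] by simp
    qed
    have "residue_field absp = (\<lambda>x. {x}) ` (UNIV :: 'a set)"
    proof -
      have sing2: "(\<lambda>x. {y \<in> val_ring absp. absp (y - x) < 1}) = (\<lambda>x. {x})"
        by (rule ext) (rule sing)
      show ?thesis unfolding residue_field_def sing2 unfolding vr ..
    qed
    then have "card (UNIV :: 'a set) = 1" "finite (UNIV :: 'a set)"
      using fin q1 by (simp_all add: card_image finite_image_iff)
    then obtain c :: 'a where "UNIV = {c}" using card_1_singletonE by blast
    then have "(0::'a) = 1" by (metis UNIV_I singletonD)
    then show False by simp
  qed
  ultimately show ?thesis by linarith
qed

theorem lemma4p1:
  fixes absp :: "'a::field \<Rightarrow> real" and q :: nat and a \<alpha> :: 'a and n :: nat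
  assumes F: "nonarch_local_field absp q"
    and a: "a \<noteq> 0" and alpha: "\<alpha> \<noteq> 0" and n: "0 < n"
  shows
    "(\<forall>p e. CHAR('a) = 0 \<and> prime p \<and> 0 < e \<and> absp (of_nat p) = 1 / real q ^ e \<longrightarrow>
        (\<forall>x \<in> disk absp a (absp a / real q ^ (e + 1)). \<forall>y \<in> disk absp a (absp a / real q ^ (e + 1)).
           absp (\<alpha> * x ^ n - \<alpha> * y ^ n)
             = absp \<alpha> * absp (of_nat n) * absp a ^ (n - 1) * absp (x - y)))
     \<and>
     (\<forall>p. CHAR('a) = p \<and> 0 < p \<longrightarrow>
        (\<forall>x \<in> disk absp a (absp a / real q). \<forall>y \<in> disk absp a (absp a / real q).
           absp (\<alpha> * x ^ n - \<alpha> * y ^ n)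
             = absp \<alpha> * absp a ^ (n - p ^ multiplicity p n) * absp (x - y) ^ (p ^ multiplicity p n))
        \<and> (\<not> p dvd n \<longrightarrow>
             (\<forall>x \<in> disk absp a (absp a / real q). \<forall>y \<in> disk absp a (absp a / real q).
                absp (\<alpha> * x ^ n - \<alpha> * y ^ n) = (absp \<alpha> * absp a ^ (n - 1)) * absp (x - y))))"
proof -
  have N: "nonarch_abs absp" using F by (simp add: nonarch_local_field_def)
  have q2: "2 \<le> q" by (rule q_ge2[OF F])
  have qpos: "(0::real) < real q" using q2 by simp
  have q1: "(1::real) < real q" using q2 by simp
  have scal: "absp (\<alpha> * x ^ n - \<alpha> * y ^ n) = absp \<alpha> * absp (x ^ n - y ^ n)" for x y
    by (simp add: right_diff_distrib[symmetric] na_mult[OF N])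
  have A: "\<forall>p e. CHAR('a) = 0 \<and> prime p \<and> 0 < e \<and> absp (of_nat p) = 1 / real q ^ e \<longrightarrow>
        (\<forall>x \<in> disk absp a (absp a / real q ^ (e + 1)). \<forall>y \<in> disk absp a (absp a / real q ^ (e + 1)).
           absp (\<alpha> * x ^ n - \<alpha> * y ^ n)
             = absp \<alpha> * absp (of_nat n) * absp a ^ (n - 1) * absp (x - y))"
  proof (intro allI impI ballI)
    fix p e x y
    assume H: "CHAR('a) = 0 \<and> prime p \<and> 0 < e \<and> absp (of_nat p) = 1 / real q ^ e"
      and x: "x \<in> disk absp a (absp a / real q ^ (e + 1))"
      and y: "y \<in> disk absp a (absp a / real q ^ (e + 1))"
    define r where "r = 1 / real q ^ (e + 1)"
    define P where "P = absp (of_nat p :: 'a)"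
    have P: "P = 1 / real q ^ e" using H by (simp add: P_def)
    have qe: "1 < real q ^ e" using q1 H by (simp add: one_less_power)
    have Pl: "P < 1" using qe P by (simp add: divide_less_eq)
    have P0: "0 \<le> P" unfolding P_def by (rule na_nonneg[OF N])
    have rP: "r = P / real q" using P by (simp add: r_def)
    have xr: "absp (x - a) \<le> absp a * r" using x by (simp add: disk_def r_def)
    have yr: "absp (y - a) \<le> absp a * r" using y by (simp add: disk_def r_def)
    have nne: "(of_nat n :: 'a) \<noteq> 0" using H n by (simp add: of_nat_eq_0_iff_char_dvd)
    have npos: "0 < absp (of_nat n :: 'a)"
      using nne na_zero[OF N, of "of_nat n"] na_nonneg[OF N, of "of_nat n"] by linarith
    have hyp: "absp (of_nat (n choose j) :: 'a) * r ^ (j - 1) < absp (of_nat n :: 'a)"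
      if j: "2 \<le> j" "j \<le> n" for j
    proof -
      have "Suc (j - 1) * (Suc (n - 1) choose Suc (j - 1)) = Suc (n - 1) * ((n - 1) choose (j - 1))"
        by (rule Suc_times_binomial)
      then have eq: "j * (n choose j) = n * ((n - 1) choose (j - 1))" using j by simp
      have "absp (of_nat j :: 'a) * absp (of_nat (n choose j) :: 'a)
            = absp (of_nat n :: 'a) * absp (of_nat ((n - 1) choose (j - 1)) :: 'a)"
        using eq by (metis of_nat_mult na_mult[OF N])
      also have "\<dots> \<le> absp (of_nat n :: 'a)"
        using na_of_nat_le[OF N] na_nonneg[OF N] by (simp add: mult_left_le)
      finally have 1: "absp (of_nat j :: 'a) * absp (of_nat (n choose j) :: 'a) \<le> absp (of_nat n :: 'a)" .
      have low: "P ^ (j - 1) \<le> absp (of_nat j :: 'a)"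
        unfolding P_def using na_int_lower[OF N, of p j] H Pl j unfolding P_def by simp
      have 2: "P ^ (j - 1) * absp (of_nat (n choose j) :: 'a) \<le> absp (of_nat n :: 'a)"
        using low 1 na_nonneg[OF N] by (meson mult_right_mono order_trans)
      have qj: "1 < real q ^ (j - 1)" using q1 j by (simp add: one_less_power)
      have "absp (of_nat (n choose j) :: 'a) * r ^ (j - 1)
            = (P ^ (j - 1) * absp (of_nat (n choose j) :: 'a)) / real q ^ (j - 1)"
        by (simp add: rP power_divide)
      also have "\<dots> \<le> absp (of_nat n :: 'a) / real q ^ (j - 1)"
        using 2 qj by (simp add: divide_right_mono)
      also have "\<dots> < absp (of_nat n :: 'a)" using npos qj by (simp add: divide_less_eq)
      finally show ?thesis .
    qed
    have "absp (x ^ n - y ^ n) = absp (of_nat n) * absp a ^ (n - 1) * absp (x - y)"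
      by (rule na_core2[OF N a n xr yr hyp])
    then show "absp (\<alpha> * x ^ n - \<alpha> * y ^ n) = absp \<alpha> * absp (of_nat n) * absp a ^ (n - 1) * absp (x - y)"
      using scal by (simp add: mult_ac)
  qed
  have B: "\<forall>p. CHAR('a) = p \<and> 0 < p \<longrightarrow>
        (\<forall>x \<in> disk absp a (absp a / real q). \<forall>y \<in> disk absp a (absp a / real q).
           absp (\<alpha> * x ^ n - \<alpha> * y ^ n)
             = absp \<alpha> * absp a ^ (n - p ^ multiplicity p n) * absp (x - y) ^ (p ^ multiplicity p n))
        \<and> (\<not> p dvd n \<longrightarrow>
             (\<forall>x \<in> disk absp a (absp a / real q). \<forall>y \<in> disk absp a (absp a / real q).
                absp (\<alpha> * x ^ n - \<alpha> * y ^ n) = (absp \<alpha> * absp a ^ (n - 1)) * absp (x - y)))"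
  proof (intro allI impI)
    fix p assume H: "CHAR('a) = p \<and> 0 < p"
    have pr: "prime p" using H prime_CHAR_semidom by blast
    have p0: "(of_nat p :: 'a) = 0" using H of_nat_CHAR by metis
    have pl: "absp (of_nat p :: 'a) < 1" using p0 na_0[OF N] by simp
    define v where "v = multiplicity p n"
    define P where "P = p ^ v"
    obtain m where nm: "n = P * m" and md: "\<not> p dvd m"
      using multiplicity_decompose'[of n p] n pr unfolding P_def v_def by (metis neq0_conv not_prime_unit)
    have m0: "0 < m" using nm n by (cases m) auto
    have Ppos: "0 < P" using pr unfolding P_def by (simp add: prime_gt_0_nat)
    have mu: "absp (of_nat m :: 'a) = 1" by (rule na_unit[OF N pr pl md])
    have frob: "(u + w) ^ P = u ^ P + w ^ P" for u w :: 'a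
      using freshmans_dream'[of P v u w] pr H unfolding P_def by simp
    have dfrob: "(u - w) ^ P = u ^ P - w ^ P" for u w :: 'a
      using frob[of "u - w" w] by (simp add: algebra_simps)
    have B1: "absp (\<alpha> * x ^ n - \<alpha> * y ^ n) = absp \<alpha> * absp a ^ (n - P) * absp (x - y) ^ P"
      if x: "x \<in> disk absp a (absp a / real q)" and y: "y \<in> disk absp a (absp a / real q)" for x y
    proof -
      define r :: real where "r = 1 / real q"
      have r0: "0 \<le> r" using qpos by (simp add: r_def)
      have A0: "a ^ P \<noteq> 0" using a by simp
      have qP: "real q \<le> real q ^ P" using q1 Ppos
        by (metis One_nat_def Suc_leI less_imp_le power_increasing power_one_right)
      have near: "absp (z ^ P - a ^ P) \<le> absp (a ^ P) * r"
        if z: "z \<in> disk absp a (absp a / real q)" for z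
      proof -
        have "absp (z ^ P - a ^ P) = absp (z - a) ^ P" by (simp add: dfrob[symmetric] na_power[OF N])
        also have "\<dots> \<le> (absp a / real q) ^ P"
          using z na_nonneg[OF N] by (intro power_mono) (auto simp: disk_def)
        also have "\<dots> = absp (a ^ P) / real q ^ P" by (simp add: na_power[OF N] power_divide)
        also have "\<dots> \<le> absp (a ^ P) / real q"
          using qP qpos na_nonneg[OF N] by (intro divide_left_mono) auto
        also have "\<dots> = absp (a ^ P) * r" by (simp add: r_def)
        finally show ?thesis .
      qed
      have hyp: "absp (of_nat (m choose j) :: 'a) * r ^ (j - 1) < absp (of_nat m :: 'a)"
        if j: "2 \<le> j" "j \<le> m" for j
      proof -
        have "r ^ (j - 1) < 1" using q1 j r0 by (simp add: r_def power_less_one_iff)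
        moreover have "absp (of_nat (m choose j) :: 'a) \<le> 1" by (rule na_of_nat_le[OF N])
        ultimately have "absp (of_nat (m choose j) :: 'a) * r ^ (j - 1) < 1"
          using na_nonneg[OF N] r0
          by (metis dual_order.strict_trans2 mult_left_le_one_le mult_less_cancel_left2 zero_le_power)
        then show ?thesis using mu by simp
      qed
      have core: "absp ((x ^ P) ^ m - (y ^ P) ^ m) = absp (of_nat m :: 'a) * absp (a ^ P) ^ (m - 1) * absp (x ^ P - y ^ P)"
        by (rule na_core2[OF N A0 m0 near[OF x] near[OF y] hyp])
      have "x ^ n - y ^ n = (x ^ P) ^ m - (y ^ P) ^ m" by (simp add: nm power_mult)
      moreover have "absp (x ^ P - y ^ P) = absp (x - y) ^ P" by (simp add: dfrob[symmetric] na_power[OF N])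
      moreover have "absp (a ^ P) ^ (m - 1) = absp a ^ (n - P)"
        using nm m0 by (simp add: na_power[OF N] flip: power_mult) (simp add: diff_mult_distrib2 mult.commute)
      ultimately show ?thesis using core scal mu by (simp add: mult_ac)
    qed
    have C1: "\<forall>x \<in> disk absp a (absp a / real q). \<forall>y \<in> disk absp a (absp a / real q).
           absp (\<alpha> * x ^ n - \<alpha> * y ^ n)
             = absp \<alpha> * absp a ^ (n - p ^ multiplicity p n) * absp (x - y) ^ (p ^ multiplicity p n)"
      using B1 unfolding P_def v_def by blast
    have C2: "\<not> p dvd n \<longrightarrow>
             (\<forall>x \<in> disk absp a (absp a / real q). \<forall>y \<in> disk absp a (absp a / real q).
                absp (\<alpha> * x ^ n - \<alpha> * y ^ n) = (absp \<alpha> * absp a ^ (n - 1)) * absp (x - y))"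
    proof (intro impI ballI)
      fix x y assume nd: "\<not> p dvd n" and x: "x \<in> disk absp a (absp a / real q)"
        and y: "y \<in> disk absp a (absp a / real q)"
      have "v = 0" unfolding v_def using nd by (simp add: not_dvd_imp_multiplicity_0)
      then have "P = 1" by (simp add: P_def)
      then show "absp (\<alpha> * x ^ n - \<alpha> * y ^ n) = (absp \<alpha> * absp a ^ (n - 1)) * absp (x - y)"
        using B1[OF x y] by simp
    qed
    from C1 C2 show "(\<forall>x \<in> disk absp a (absp a / real q). \<forall>y \<in> disk absp a (absp a / real q).
           absp (\<alpha> * x ^ n - \<alpha> * y ^ n)
             = absp \<alpha> * absp a ^ (n - p ^ multiplicity p n) * absp (x - y) ^ (p ^ multiplicity p n)) \<and> (\<not> p dvd n \<longrightarrow>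
             (\<forall>x \<in> disk absp a (absp a / real q). \<forall>y \<in> disk absp a (absp a / real q).
                absp (\<alpha> * x ^ n - \<alpha> * y ^ n) = (absp \<alpha> * absp a ^ (n - 1)) * absp (x - y)))" by blast
  qed
  show ?thesis using A B by blast
qed

end
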